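(* Assume that for each $k$ and each $x\in\mathrm{supp}(\hat{\mathsf p}_k)$ we have $\hat\pi_j(x)=0$ for all $j\neq k$ (in particular the $\hat{\mathsf p}_k$ have mutually disjoint supports), and let $\epsilon_k=D_{KL}(\hat{\mathsf p}_k\,\|\,\hat\pi_k)<\infty$. Consider any static gate in $\mathcal G_1$, i.e. $g(x,k)=w_k$ independent of $x$ (equivalently $w\in\Delta$), with model $\pi_w=\sum_kw_k\hat\pi_k$. Then $$\max_{k\in[1,p]}D_{KL}(\hat{\mathsf p}_k\,\|\,\pi_w)\ \ge\ \log\Big(\sum_{j=1}^pe^{\epsilon_j}\Big).$$
   Context: Fix an integer $p\ge 1$, $[1,p]=\{1,\dots,p\}$, $\Delta=\{\lambda\in\mathbb R^p:\lambda_k\ge 0,\ \sum_k\lambda_k=1\}$. Let $\hat{\mathsf p}_1,\dots,\hat{\mathsf p}_p$ be probability distributions with finite supports, $\mathcal X_0=\bigcup_k\mathrm{supp}(\hat{\mathsf p}_k)$, and $\hat\pi_1,\dots,\hat\pi_p$ probability distributions on $\mathcal X_0$. A gate is $g:\mathcal X_0\times[1,p]\to[0,1]$ with $\sum_kg(x,k)=1$ for each $x$; $\pi_g(x)=\sum_kg(x,k)\hat\pi_k(x)$, $Z_g=\sum_{x\in\mathcal X_0}\pi_g(x)$, $\mathcal G_1=\{g:Z_g=1\}$. $D_{KL}(P\|Q)=\sum_xP(x)\log\frac{P(x)}{Q(x)}\in[0,\infty]$ with conventions $0\log\frac0q=0$, $a\log\frac a0=+\infty$ for $a>0$. *)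

theory Defs
  imports "HOL-Analysis.Analysis"
begin

definition supp :: "('a \<Rightarrow> real) \<Rightarrow> 'a set" where
  "supp P = {x. P x \<noteq> 0}"

definition fin_dist :: "('a \<Rightarrow> real) \<Rightarrow> bool" where
  "fin_dist P \<longleftrightarrow> (\<forall>x. 0 \<le> P x) \<and> finite (supp P) \<and> (\<Sum>x\<in>supp P. P x) = 1"

text \<open>Kullback--Leibler divergence (natural log) with the conventions
  0 log (0/q) = 0 and a log (a/0) = +infinity for a > 0; the sum ranges over the
  support of P (the remaining terms vanish).\<close>
definition KL :: "('a \<Rightarrow> real) \<Rightarrow> ('a \<Rightarrow> real) \<Rightarrow> ereal" where
  "KL P Q = (if \<exists>x\<in>supp P. Q x = 0 then \<infinity>
             else ereal (\<Sum>x\<in>supp P. P x * ln (P x / Q x)))"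

end

theory Submission
  imports Defs
begin

lemma per_k:
  fixes p :: nat and ph :: "nat \<Rightarrow> 'a \<Rightarrow> real" and pih :: "nat \<Rightarrow> 'a \<Rightarrow> real"
    and eps :: "nat \<Rightarrow> real" and w :: "nat \<Rightarrow> real" and k :: nat and S :: real
  assumes k: "k \<in> {1..p}"
    and phd: "fin_dist (ph k)"
    and pihd: "fin_dist (pih k)"
    and sep: "\<forall>x\<in>supp (ph k). \<forall>j\<in>{1..p}. j \<noteq> k \<longrightarrow> pih j x = 0"
    and e: "KL (ph k) (pih k) = ereal (eps k)"
    and wk: "0 \<le> w k"
    and Spos: "0 < S"
    and lt: "KL (ph k) (\<lambda>x. \<Sum>j=1..p. w j * pih j x) < ereal (ln S)"
  shows "exp (eps k) < w k * S"
proof -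
  let ?Q = "\<lambda>x. \<Sum>j=1..p. w j * pih j x"
  have Qeq: "?Q x = w k * pih k x" if "x \<in> supp (ph k)" for x
  proof -
    have "?Q x = (\<Sum>j\<in>{k}. w j * pih j x)"
      by (rule sum.mono_neutral_right) (use k sep that in auto)
    then show ?thesis by simp
  qed
  have fin: "finite (supp (ph k))" and s1: "(\<Sum>x\<in>supp (ph k). ph k x) = 1"
    using phd unfolding fin_dist_def by auto
  have ne: "supp (ph k) \<noteq> {}" using s1 by auto
  have nz: "\<not> (\<exists>x\<in>supp (ph k). pih k x = 0)" using e unfolding KL_def by (auto split: if_splits)
  have epsv: "eps k = (\<Sum>x\<in>supp (ph k). ph k x * ln (ph k x / pih k x))"
    using e nz unfolding KL_def by auto
  have wpos: "w k > 0"
  proof (rule ccontr)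
    assume "\<not> w k > 0"
    hence "w k = 0" using wk by auto
    then obtain x where "x \<in> supp (ph k)" "?Q x = 0" using ne Qeq by auto
    hence "KL (ph k) ?Q = \<infinity>" unfolding KL_def by auto
    with lt show False by simp
  qed
  have phpos: "ph k x > 0" if "x \<in> supp (ph k)" for x
    using phd that unfolding fin_dist_def supp_def by (metis less_eq_real_def mem_Collect_eq)
  have pihpos: "pih k x > 0" if "x \<in> supp (ph k)" for x
    using pihd that nz unfolding fin_dist_def by (metis less_eq_real_def)
  have Qnz: "\<not> (\<exists>x\<in>supp (ph k). ?Q x = 0)" using Qeq wpos pihpos by fastforce
  have "KL (ph k) ?Q = ereal (\<Sum>x\<in>supp (ph k). ph k x * ln (ph k x / (w k * pih k x)))"
    using Qnz Qeq unfolding KL_def by simp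
  also have "(\<Sum>x\<in>supp (ph k). ph k x * ln (ph k x / (w k * pih k x)))
     = (\<Sum>x\<in>supp (ph k). ph k x * ln (ph k x / pih k x) - ph k x * ln (w k))"
  proof (rule sum.cong[OF refl])
    fix x assume x: "x \<in> supp (ph k)"
    have "ln (ph k x / (w k * pih k x)) = ln (ph k x / pih k x) - ln (w k)"
      using phpos[OF x] pihpos[OF x] wpos by (simp add: ln_div ln_mult)
    then show "ph k x * ln (ph k x / (w k * pih k x)) = ph k x * ln (ph k x / pih k x) - ph k x * ln (w k)"
      by (simp add: right_diff_distrib)
  qed
  also have "\<dots> = eps k - ln (w k)"
    by (simp add: sum_subtractf epsv sum_distrib_right[symmetric] s1)
  finally have "eps k - ln (w k) < ln S" using lt by simp
  hence "eps k < ln S + ln (w k)" by simp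
  hence "exp (eps k) < exp (ln S + ln (w k))" by simp
  also have "\<dots> = w k * S" using wpos Spos by (simp add: exp_add)
  finally show ?thesis .
qed

theorem mainTheorem4:
  fixes p :: nat
    and ph :: "nat \<Rightarrow> 'a \<Rightarrow> real"
    and pih :: "nat \<Rightarrow> 'a \<Rightarrow> real"
    and eps :: "nat \<Rightarrow> real"
    and w :: "nat \<Rightarrow> real"
  assumes p_pos: "1 \<le> p"
    and ph_dist: "\<forall>k\<in>{1..p}. fin_dist (ph k)"
    and pih_dist: "\<forall>k\<in>{1..p}. fin_dist (pih k) \<and> supp (pih k) \<subseteq> (\<Union>j\<in>{1..p}. supp (ph j))"
    and sep: "\<forall>k\<in>{1..p}. \<forall>x\<in>supp (ph k). \<forall>j\<in>{1..p}. j \<noteq> k \<longrightarrow> pih j x = 0"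
    and eps_def: "\<forall>k\<in>{1..p}. KL (ph k) (pih k) = ereal (eps k)"
    and w_nonneg: "\<forall>k\<in>{1..p}. 0 \<le> w k"
    and w_sum: "(\<Sum>k=1..p. w k) = 1"
  shows "Max ((\<lambda>k. KL (ph k) (\<lambda>x. \<Sum>j=1..p. w j * pih j x)) ` {1..p})
           \<ge> ereal (ln (\<Sum>j=1..p. exp (eps j)))"
proof (rule ccontr)
  let ?S = "\<Sum>j=1..p. exp (eps j)"
  assume "\<not> ?thesis"
  hence M: "Max ((\<lambda>k. KL (ph k) (\<lambda>x. \<Sum>j=1..p. w j * pih j x)) ` {1..p}) < ereal (ln ?S)"
    by simp
  have Spos: "?S > 0" using p_pos by (intro sum_pos) auto
  have each: "exp (eps k) < w k * ?S" if k: "k \<in> {1..p}" for k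
  proof (rule per_k[where p=p and ph=ph and pih=pih])
    show "KL (ph k) (\<lambda>x. \<Sum>j=1..p. w j * pih j x) < ereal (ln ?S)"
      using M k by (meson Max_ge finite_atLeastAtMost finite_imageI image_eqI le_less_trans)
  qed (use k ph_dist pih_dist sep eps_def w_nonneg Spos in auto)
  have "?S < (\<Sum>j=1..p. w j * ?S)"
    using p_pos each by (intro sum_strict_mono) auto
  also have "\<dots> = ?S" using w_sum by (simp add: sum_distrib_right[symmetric])
  finally show False by simp
qed

end
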